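(* Let $f \in \mathbb{N}_0[x^{\pm 1}]$ satisfy $f(1) > 3$ and $|\operatorname{supp}(f)| > 1$. Then $f$ can be written as $f = g + h$ with $g, h$ irreducible elements of $\mathbb{N}_0[x^{\pm 1}]$.
   Context: $\mathbb{N}_0[x^{\pm 1}]$ denotes the semiring of Laurent polynomials in $x$ with nonnegative integer coefficients, under the usual addition and multiplication. For $f = \sum_i c_i x^{k_i}$ with all $c_i$ positive integers and the $k_i$ distinct integers, $\operatorname{supp}(f) = \{k_i\}$ is the set of exponents appearing in $f$, and $f(1)=\sum_i c_i$. The units of $\mathbb{N}_0[x^{\pm 1}]$ are exactly the monomials $x^k$, $k \in \mathbb{Z}$. An element $f$ is irreducible if it is nonzero, not a unit, and whenever $f = gh$ with $g,h \in \mathbb{N}_0[x^{\pm 1}]$, one of $g,h$ is a unit. *)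

theory Defs
  imports "HOL-Library.Poly_Mapping" "HOL-Computational_Algebra.Factorial_Ring"
begin

(* N_0[x^{+-1}] is modelled as int =>0 nat: finitely supported maps from exponents
 to coefficients; the semiring multiplication of poly_mapping is convolution
 (exponents add), so this is exactly the Laurent polynomial semiring.
 supp f = keys f, and f(1) is the sum of all coefficients. *)

type_synonym laurent_nat = "int \<Rightarrow>\<^sub>0 nat"

definition eval_one :: "laurent_nat \<Rightarrow> nat" where
  "eval_one f = (\<Sum>k\<in>Poly_Mapping.keys f. Poly_Mapping.lookup f k)"

end

theory Submission
  imports Defs
begin

lemma lookup_mult_sum:
  fixes u v :: laurent_nat
  shows "Poly_Mapping.lookup (u * v) x = (\<Sum>p\<in>Poly_Mapping.keys u \<times> Poly_Mapping.keys v. if fst p + snd p = x then Poly_Mapping.lookup u (fst p) * Poly_Mapping.lookup v (snd p) else 0)"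
proof -
  have "Poly_Mapping.lookup (u * v) (x::int) = prod_fun (Poly_Mapping.lookup u) (Poly_Mapping.lookup v) x"
    by (simp add: times_poly_mapping.rep_eq)
  also have "\<dots> = (\<Sum>(a, b). Poly_Mapping.lookup u a * Poly_Mapping.lookup v b when x = a + b)"
    by (rule prod_fun_unfold_prod) auto
  also have "\<dots> = (\<Sum>p\<in>Poly_Mapping.keys u \<times> Poly_Mapping.keys v. (\<lambda>(a,b). Poly_Mapping.lookup u a * Poly_Mapping.lookup v b when x = a + b) p)"
    by (rule Sum_any.expand_superset) (auto simp: in_keys_iff when_def split: if_splits)
  also have "\<dots> = (\<Sum>p\<in>Poly_Mapping.keys u \<times> Poly_Mapping.keys v. if fst p + snd p = x then Poly_Mapping.lookup u (fst p) * Poly_Mapping.lookup v (snd p) else 0)"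
    by (rule sum.cong) (auto simp: when_def)
  finally show ?thesis .
qed

lemma lookup_mult_ge1:
  fixes u v :: laurent_nat
  assumes "a \<in> Poly_Mapping.keys u" "b \<in> Poly_Mapping.keys v"
  shows "Poly_Mapping.lookup u a * Poly_Mapping.lookup v b \<le> Poly_Mapping.lookup (u * v) (a + b)"
proof -
  have "(if fst (a,b) + snd (a,b) = a + b then Poly_Mapping.lookup u (fst (a,b)) * Poly_Mapping.lookup v (snd (a,b)) else 0)
     \<le> (\<Sum>p\<in>Poly_Mapping.keys u \<times> Poly_Mapping.keys v. if fst p + snd p = a + b then Poly_Mapping.lookup u (fst p) * Poly_Mapping.lookup v (snd p) else 0)"
    by (rule member_le_sum) (use assms in auto)
  then show ?thesis by (simp add: lookup_mult_sum)
qed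

lemma in_keys_mult:
  fixes u v :: laurent_nat
  assumes "a \<in> Poly_Mapping.keys u" "b \<in> Poly_Mapping.keys v"
  shows "a + b \<in> Poly_Mapping.keys (u * v)"
proof -
  have "0 < Poly_Mapping.lookup u a * Poly_Mapping.lookup v b" using assms by (simp add: in_keys_iff)
  then have "0 < Poly_Mapping.lookup (u * v) (a + b)" using lookup_mult_ge1[OF assms] by (rule less_le_trans)
  then show ?thesis by (simp add: in_keys_iff)
qed

lemma lookup_mult_ge2:
  fixes u v :: laurent_nat
  assumes "i \<in> Poly_Mapping.keys u" "l \<in> Poly_Mapping.keys v" "j \<in> Poly_Mapping.keys u" "k \<in> Poly_Mapping.keys v"
    and "i \<noteq> j" and "i + l = x" and "j + k = x"
  shows "2 \<le> Poly_Mapping.lookup (u * v) x"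
proof -
  let ?F = "\<lambda>p. if fst p + snd p = x then Poly_Mapping.lookup u (fst p) * Poly_Mapping.lookup v (snd p) else 0"
  have "(\<Sum>p\<in>{(i,l),(j,k)}. ?F p) \<le> (\<Sum>p\<in>Poly_Mapping.keys u \<times> Poly_Mapping.keys v. ?F p)"
    by (rule sum_mono2) (use assms in auto)
  moreover have "(\<Sum>p\<in>{(i,l),(j,k)}. ?F p) = ?F (i,l) + ?F (j,k)" using assms by simp
  moreover have "1 \<le> ?F (i,l)" "1 \<le> ?F (j,k)" using assms by (auto simp: in_keys_iff)
  ultimately show ?thesis by (simp add: lookup_mult_sum)
qed

lemma not_unit_two_keys:
  fixes g :: laurent_nat
  assumes "x \<in> Poly_Mapping.keys g" "y \<in> Poly_Mapping.keys g" "x \<noteq> y"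
  shows "\<not> g dvd 1"
proof
  assume "g dvd 1"
  then obtain w where w: "1 = g * w" by (auto elim: dvdE)
  have "w \<noteq> 0" using w by auto
  then obtain k where k: "k \<in> Poly_Mapping.keys w" by fastforce
  have "x + k \<in> Poly_Mapping.keys (g * w)" "y + k \<in> Poly_Mapping.keys (g * w)"
    using in_keys_mult[OF assms(1) k] in_keys_mult[OF assms(2) k] by auto
  then have "x + k \<in> Poly_Mapping.keys (1::laurent_nat)" "y + k \<in> Poly_Mapping.keys (1::laurent_nat)"
    using w by auto
  then show False using assms(3) by simp
qed

lemma single_unit: "(Poly_Mapping.single t (1::nat) :: laurent_nat) dvd 1"
proof
  show "(1::laurent_nat) = Poly_Mapping.single t 1 * Poly_Mapping.single (-t) 1"
    by (metis mult_single single_one add.right_inverse mult_1)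
qed

lemma one_key_dvd:
  fixes u v :: laurent_nat
  assumes "Poly_Mapping.keys u = {t}"
  shows "Poly_Mapping.lookup u t dvd Poly_Mapping.lookup (u * v) e"
  unfolding lookup_mult_sum assms by (rule dvd_sum) auto

lemma one_key_single:
  fixes u :: laurent_nat
  assumes "Poly_Mapping.keys u = {t}"
  shows "u = Poly_Mapping.single t (Poly_Mapping.lookup u t)"
  by (rule poly_mapping_eqI) (use assms in \<open>auto simp: lookup_single when_def in_keys_iff\<close>)

lemma two_keys_of_nonunit:
  fixes g w w' :: laurent_nat
  assumes g: "g = w * w'" and nu: "\<not> w dvd 1" and one: "Poly_Mapping.lookup g e0 = 1"
  shows "\<exists>i j. i \<in> Poly_Mapping.keys w \<and> j \<in> Poly_Mapping.keys w \<and> i < j"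
proof (rule ccontr)
  assume no: "\<not> ?thesis"
  have "w \<noteq> 0" using g one by auto
  then obtain t where t: "t \<in> Poly_Mapping.keys w" by fastforce
  have kw: "Poly_Mapping.keys w = {t}"
  proof
    show "Poly_Mapping.keys w \<subseteq> {t}"
    proof
      fix z assume "z \<in> Poly_Mapping.keys w"
      with t no show "z \<in> {t}" by (metis linorder_neqE singletonI)
    qed
  qed (use t in auto)
  have "Poly_Mapping.lookup w t dvd 1" using one_key_dvd[OF kw, of w' e0] g one by simp
  then have "Poly_Mapping.lookup w t = 1" by simp
  then have "w = Poly_Mapping.single t 1" using one_key_single[OF kw] by simp
  then show False using nu single_unit by simp
qed

lemma irr_crit:
  fixes g :: laurent_nat
  assumes one: "Poly_Mapping.lookup g e0 = 1"
    and two: "x \<in> Poly_Mapping.keys g" "y \<in> Poly_Mapping.keys g" "x \<noteq> y"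
    and pairs: "\<And>p q r s. p \<in> Poly_Mapping.keys g \<Longrightarrow> q \<in> Poly_Mapping.keys g \<Longrightarrow>
       r \<in> Poly_Mapping.keys g \<Longrightarrow> s \<in> Poly_Mapping.keys g \<Longrightarrow> p < q \<Longrightarrow> q < s \<Longrightarrow>
       p < r \<Longrightarrow> r < s \<Longrightarrow> q + r = p + s \<Longrightarrow> (\<forall>e\<in>Poly_Mapping.keys g. p \<le> e \<and> e \<le> s) \<Longrightarrow>
       q = r \<and> Poly_Mapping.lookup g q = 1"
  shows "irreducible g"
  unfolding irreducible_def
proof (intro conjI allI impI)
  show "g \<noteq> 0" using one by auto
  show "\<not> g dvd 1" by (rule not_unit_two_keys[OF two])
  fix u v assume g: "g = u * v"
  show "u dvd 1 \<or> v dvd 1"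
  proof (rule ccontr)
    assume "\<not> (u dvd 1 \<or> v dvd 1)"
    then have nu: "\<not> u dvd 1" and nv: "\<not> v dvd 1" by auto
    obtain i0 j0 where ij0: "i0 \<in> Poly_Mapping.keys u" "j0 \<in> Poly_Mapping.keys u" "i0 < j0"
      using two_keys_of_nonunit[OF g nu one] by blast
    obtain k0 l0 where kl0: "k0 \<in> Poly_Mapping.keys v" "l0 \<in> Poly_Mapping.keys v" "k0 < l0"
      using two_keys_of_nonunit[of g v u, OF _ nv one] g by (auto simp: mult.commute)
    define i where "i = Min (Poly_Mapping.keys u)"
    define j where "j = Max (Poly_Mapping.keys u)"
    define k where "k = Min (Poly_Mapping.keys v)"
    define l where "l = Max (Poly_Mapping.keys v)"
    have iu: "i \<in> Poly_Mapping.keys u" and ju: "j \<in> Poly_Mapping.keys u"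
      unfolding i_def j_def using ij0 by (auto intro: Min_in Max_in)
    have kv: "k \<in> Poly_Mapping.keys v" and lv: "l \<in> Poly_Mapping.keys v"
      unfolding k_def l_def using kl0 by (auto intro: Min_in Max_in)
    have bu: "\<And>a. a \<in> Poly_Mapping.keys u \<Longrightarrow> i \<le> a \<and> a \<le> j" unfolding i_def j_def by auto
    have bv: "\<And>a. a \<in> Poly_Mapping.keys v \<Longrightarrow> k \<le> a \<and> a \<le> l" unfolding k_def l_def by auto
    have ij: "i < j" using bu[OF ij0(1)] bu[OF ij0(2)] ij0(3) by linarith
    have kl: "k < l" using bv[OF kl0(1)] bv[OF kl0(2)] kl0(3) by linarith
    have bnd: "\<forall>e\<in>Poly_Mapping.keys g. i + k \<le> e \<and> e \<le> j + l"
    proof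
      fix e assume "e \<in> Poly_Mapping.keys g"
      then obtain a b where "e = a + b" "a \<in> Poly_Mapping.keys u" "b \<in> Poly_Mapping.keys v"
        using keys_mult[of u v] g by blast
      with bu bv show "i + k \<le> e \<and> e \<le> j + l" by fastforce
    qed
    have K: "i + k \<in> Poly_Mapping.keys g" "i + l \<in> Poly_Mapping.keys g" "j + k \<in> Poly_Mapping.keys g"
      "j + l \<in> Poly_Mapping.keys g"
      using in_keys_mult iu ju kv lv g by auto
    have "i + l = j + k \<and> Poly_Mapping.lookup g (i + l) = 1"
      by (rule pairs[OF K(1) K(2) K(3) K(4)]) (use ij kl bnd in auto)
    moreover have "2 \<le> Poly_Mapping.lookup g (i + l)"
      unfolding g by (rule lookup_mult_ge2[OF iu lv ju kv]) (use ij calculation in auto)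
    ultimately show False by simp
  qed
qed

lemma irr_two:
  "irreducible (Poly_Mapping.single t (2::nat) :: laurent_nat)"
  unfolding irreducible_def
proof (intro conjI allI impI)
  show "Poly_Mapping.single t (2::nat) \<noteq> (0::laurent_nat)" by (metis lookup_single_eq zero_neq_numeral lookup_zero)
  show "\<not> (Poly_Mapping.single t (2::nat) :: laurent_nat) dvd 1"
  proof
    assume "(Poly_Mapping.single t (2::nat) :: laurent_nat) dvd 1"
    then obtain w where w: "1 = Poly_Mapping.single t (2::nat) * w" by (auto elim: dvdE)
    have "2 dvd Poly_Mapping.lookup (Poly_Mapping.single t (2::nat) * w) 0"
      using one_key_dvd[of "Poly_Mapping.single t (2::nat)" t w 0] by simp
    then show False using w[symmetric] by simp
  qed
  fix u v :: laurent_nat assume g: "Poly_Mapping.single t 2 = u * v"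
  have onekey: "\<exists>a. Poly_Mapping.keys w = {a}" if gw: "Poly_Mapping.single t 2 = w * w'" for w w' :: laurent_nat
  proof -
    have nz: "(Poly_Mapping.single t (2::nat) :: laurent_nat) \<noteq> 0" by (metis lookup_single_eq zero_neq_numeral lookup_zero)
    have "w \<noteq> 0" "w' \<noteq> 0" using gw nz by auto
    then obtain k where kv: "k \<in> Poly_Mapping.keys w'" by fastforce
    have "Poly_Mapping.keys w \<subseteq> {t - k}"
    proof
      fix a assume "a \<in> Poly_Mapping.keys w"
      then have "a + k \<in> Poly_Mapping.keys (Poly_Mapping.single t (2::nat) :: laurent_nat)" using in_keys_mult kv gw by metis
      then show "a \<in> {t - k}" by simp
    qed
    moreover have "Poly_Mapping.keys w \<noteq> {}" using \<open>w \<noteq> 0\<close> by simp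
    ultimately show ?thesis by blast
  qed
  obtain a where ka: "Poly_Mapping.keys u = {a}" using onekey[OF g] by blast
  obtain b where kb: "Poly_Mapping.keys v = {b}" using onekey[of v u] g by (auto simp: mult.commute)
  define c where "c = Poly_Mapping.lookup u a"
  define d where "d = Poly_Mapping.lookup v b"
  have u: "u = Poly_Mapping.single a c" using one_key_single[OF ka] c_def by simp
  have v: "v = Poly_Mapping.single b d" using one_key_single[OF kb] d_def by simp
  have "Poly_Mapping.single t 2 = (Poly_Mapping.single (a + b) (c * d) :: laurent_nat)"
    using g u v by (simp add: mult_single)
  then have "Poly_Mapping.lookup (Poly_Mapping.single t 2 :: laurent_nat) t = Poly_Mapping.lookup (Poly_Mapping.single (a + b) (c * d) :: laurent_nat) t"
    by simp
  then have "2 = (c * d when a + b = t)" by (simp add: lookup_single)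
  then have cd: "c * d = 2" by (auto simp: when_def split: if_splits)
  have "c = 1 \<or> d = 1"
  proof (rule ccontr)
    assume "\<not> ?thesis"
    moreover have "c \<noteq> 0" "d \<noteq> 0" using cd by (auto intro: ccontr)
    ultimately have "2 \<le> c" "2 \<le> d" by auto
    then have "2 * 2 \<le> c * d" by (rule mult_le_mono)
    then show False using cd by simp
  qed
  then show "u dvd 1 \<or> v dvd 1" using u v single_unit by auto
qed

definition HS :: "(int \<Rightarrow> nat) \<Rightarrow> int \<Rightarrow> int \<Rightarrow> bool" where
  "HS \<psi> A B \<longleftrightarrow> \<psi> A \<noteq> 0 \<and> A < B \<and> (\<forall>e. \<psi> e \<noteq> 0 \<longrightarrow> e \<noteq> A \<longrightarrow> e \<le> B \<and> A + B \<le> 2 * e \<and> (2 * e = A + B \<longrightarrow> \<psi> e = 1 \<or> \<psi> B = 0))"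

definition LS :: "(int \<Rightarrow> nat) \<Rightarrow> int \<Rightarrow> int \<Rightarrow> bool" where
  "LS \<psi> A B \<longleftrightarrow> \<psi> B \<noteq> 0 \<and> A < B \<and> (\<forall>e. \<psi> e \<noteq> 0 \<longrightarrow> e \<noteq> B \<longrightarrow> A \<le> e \<and> 2 * e \<le> A + B \<and> (2 * e = A + B \<longrightarrow> \<psi> e = 1 \<or> \<psi> A = 0))"

definition Good :: "(int \<Rightarrow> nat) \<Rightarrow> bool" where
  "Good \<psi> \<longleftrightarrow> ((\<exists>e0. \<psi> e0 = 1) \<and> (\<exists>x y. x \<noteq> y \<and> \<psi> x \<noteq> 0 \<and> \<psi> y \<noteq> 0) \<and> (\<exists>A B. HS \<psi> A B \<or> LS \<psi> A B))
     \<or> (\<exists>t. \<psi> = (\<lambda>e. if e = t then 2 else 0))"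

lemma HS_pairs:
  assumes "HS \<psi> A B" "\<psi> p \<noteq> 0" "\<psi> q \<noteq> 0" "\<psi> r \<noteq> 0" "\<psi> s \<noteq> 0" "p < q" "q < s" "p < r" "r < s"
    "q + r = p + s" "\<forall>e. \<psi> e \<noteq> 0 \<longrightarrow> p \<le> e \<and> e \<le> s"
  shows "q = r \<and> \<psi> q = 1"
proof -
  have HSd: "\<psi> A \<noteq> 0 \<and> A < B \<and> (\<forall>e. \<psi> e \<noteq> 0 \<longrightarrow> e \<noteq> A \<longrightarrow> e \<le> B \<and> A + B \<le> 2 * e \<and> (2 * e = A + B \<longrightarrow> \<psi> e = 1 \<or> \<psi> B = 0))"
    using assms(1) unfolding HS_def by assumption
  have H1: "\<psi> A \<noteq> 0" using HSd by (rule conjunct1)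
  have H2: "A < B" using HSd[THEN conjunct2] by (rule conjunct1)
  have H3a: "\<forall>e. \<psi> e \<noteq> 0 \<longrightarrow> e \<noteq> A \<longrightarrow> e \<le> B \<and> A + B \<le> 2 * e \<and> (2 * e = A + B \<longrightarrow> \<psi> e = 1 \<or> \<psi> B = 0)" using HSd[THEN conjunct2] by (rule conjunct2)
  note H3 = H3a[rule_format]
  have pA0: "p \<le> A" using mp[OF spec[OF assms(11)] H1] by (rule conjunct1)
  have pA: "p = A"
  proof (rule ccontr)
    assume "p \<noteq> A" have "A + B \<le> 2 * p" using mp[OF mp[OF spec[OF H3a] assms(2)] \<open>p \<noteq> A\<close>] by (rule conjunct2[THEN conjunct1])
    with pA0 H2 show False by linarith
  qed
  have qA: "q \<noteq> A" using pA assms(6) by simp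
  have rA: "r \<noteq> A" using pA assms(8) by simp
  have sA: "s \<noteq> A" using pA assms(6,7) by simp
  have hq0: "q \<le> B \<and> A + B \<le> 2 * q \<and> (2 * q = A + B \<longrightarrow> \<psi> q = 1 \<or> \<psi> B = 0)" using mp[OF mp[OF spec[OF H3a] assms(3)] qA] .
  have hq: "A + B \<le> 2 * q" "2 * q = A + B \<longrightarrow> \<psi> q = 1 \<or> \<psi> B = 0" using hq0 by (rule conjunct2[THEN conjunct1], rule conjunct2[THEN conjunct2])
  have hr: "A + B \<le> 2 * r" using mp[OF mp[OF spec[OF H3a] assms(4)] rA] by (rule conjunct2[THEN conjunct1])
  have hs: "s \<le> B" using mp[OF mp[OF spec[OF H3a] assms(5)] sA] by (rule conjunct1)
  have sB: "s = B" using hq(1) hr hs pA assms(10) by linarith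
  have q2: "2 * q = A + B" using hq(1) hr sB pA assms(10) by linarith
  have "q = r" using q2 hr sB pA assms(10) by linarith
  moreover have "\<psi> q = 1" using hq(2) q2 sB assms(5) by blast
  ultimately show ?thesis by blast
qed

lemma LS_pairs:
  assumes "LS \<psi> A B" "\<psi> p \<noteq> 0" "\<psi> q \<noteq> 0" "\<psi> r \<noteq> 0" "\<psi> s \<noteq> 0" "p < q" "q < s" "p < r" "r < s"
    "q + r = p + s" "\<forall>e. \<psi> e \<noteq> 0 \<longrightarrow> p \<le> e \<and> e \<le> s"
  shows "q = r \<and> \<psi> q = 1"
proof -
  have HSd: "\<psi> B \<noteq> 0 \<and> A < B \<and> (\<forall>e. \<psi> e \<noteq> 0 \<longrightarrow> e \<noteq> B \<longrightarrow> A \<le> e \<and> 2 * e \<le> A + B \<and> (2 * e = A + B \<longrightarrow> \<psi> e = 1 \<or> \<psi> A = 0))"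
    using assms(1) unfolding LS_def by assumption
  have H1: "\<psi> B \<noteq> 0" using HSd by (rule conjunct1)
  have H2: "A < B" using HSd[THEN conjunct2] by (rule conjunct1)
  have H3a: "\<forall>e. \<psi> e \<noteq> 0 \<longrightarrow> e \<noteq> B \<longrightarrow> A \<le> e \<and> 2 * e \<le> A + B \<and> (2 * e = A + B \<longrightarrow> \<psi> e = 1 \<or> \<psi> A = 0)" using HSd[THEN conjunct2] by (rule conjunct2)
  note H3 = H3a[rule_format]
  have sB0: "B \<le> s" using mp[OF spec[OF assms(11)] H1] by (rule conjunct2)
  have sB: "s = B"
  proof (rule ccontr)
    assume "s \<noteq> B" have "2 * s \<le> A + B" using mp[OF mp[OF spec[OF H3a] assms(5)] \<open>s \<noteq> B\<close>] by (rule conjunct2[THEN conjunct1])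
    with sB0 H2 show False by linarith
  qed
  have qB: "q \<noteq> B" using sB assms(7) by simp
  have rB: "r \<noteq> B" using sB assms(9) by simp
  have pB: "p \<noteq> B" using sB assms(6,7) by simp
  have hq0: "A \<le> q \<and> 2 * q \<le> A + B \<and> (2 * q = A + B \<longrightarrow> \<psi> q = 1 \<or> \<psi> A = 0)" using mp[OF mp[OF spec[OF H3a] assms(3)] qB] .
  have hq: "2 * q \<le> A + B" "2 * q = A + B \<longrightarrow> \<psi> q = 1 \<or> \<psi> A = 0" using hq0 by (rule conjunct2[THEN conjunct1], rule conjunct2[THEN conjunct2])
  have hr: "2 * r \<le> A + B" using mp[OF mp[OF spec[OF H3a] assms(4)] rB] by (rule conjunct2[THEN conjunct1])
  have hp: "A \<le> p" using mp[OF mp[OF spec[OF H3a] assms(2)] pB] by (rule conjunct1)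
  have pA: "p = A" using hq(1) hr hp sB assms(10) by linarith
  have q2: "2 * q = A + B" using hq(1) hr sB pA assms(10) by linarith
  have "q = r" using q2 hr sB pA assms(10) by linarith
  moreover have "\<psi> q = 1" using hq(2) q2 pA assms(2) by blast
  ultimately show ?thesis by blast
qed

lemma Good_irr:
  assumes fin: "finite {e. \<psi> e \<noteq> 0}" and G: "Good \<psi>"
  shows "irreducible (Abs_poly_mapping \<psi> :: laurent_nat)"
proof -
  have lk: "Poly_Mapping.lookup (Abs_poly_mapping \<psi> :: laurent_nat) = \<psi>"
    using fin by (simp add: Abs_poly_mapping_inverse)
  have ks: "e \<in> Poly_Mapping.keys (Abs_poly_mapping \<psi> :: laurent_nat) \<longleftrightarrow> \<psi> e \<noteq> 0" for e
    by (simp add: in_keys_iff lk)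
  show ?thesis
  proof (cases "\<exists>t. \<psi> = (\<lambda>e. if e = t then 2 else 0)")
    case True
    then obtain t where t: "\<psi> = (\<lambda>e. if e = t then 2 else 0)" by blast
    have "(Abs_poly_mapping \<psi> :: laurent_nat) = Poly_Mapping.single t 2"
      by (rule poly_mapping_eqI) (simp add: lk t lookup_single when_def)
    then show ?thesis using irr_two by simp
  next
    case False
    with G obtain e0 x y A B where e0: "\<psi> e0 = 1" and xy: "x \<noteq> y" "\<psi> x \<noteq> 0" "\<psi> y \<noteq> 0"
      and AB: "HS \<psi> A B \<or> LS \<psi> A B"
      unfolding Good_def by blast
    show ?thesis
    proof (rule irr_crit[of _ e0 x y])
      show "Poly_Mapping.lookup (Abs_poly_mapping \<psi>) e0 = 1" using e0 lk by simp
      show "x \<in> Poly_Mapping.keys (Abs_poly_mapping \<psi> :: laurent_nat)" "y \<in> Poly_Mapping.keys (Abs_poly_mapping \<psi> :: laurent_nat)" "x \<noteq> y"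
        using xy ks by auto
      fix p q r s
      assume a: "p \<in> Poly_Mapping.keys (Abs_poly_mapping \<psi> :: laurent_nat)" "q \<in> Poly_Mapping.keys (Abs_poly_mapping \<psi> :: laurent_nat)"
        "r \<in> Poly_Mapping.keys (Abs_poly_mapping \<psi> :: laurent_nat)" "s \<in> Poly_Mapping.keys (Abs_poly_mapping \<psi> :: laurent_nat)"
        "p < q" "q < s" "p < r" "r < s" "q + r = p + s"
        "\<forall>e\<in>Poly_Mapping.keys (Abs_poly_mapping \<psi> :: laurent_nat). p \<le> e \<and> e \<le> s"
      have b: "\<psi> p \<noteq> 0" "\<psi> q \<noteq> 0" "\<psi> r \<noteq> 0" "\<psi> s \<noteq> 0" "\<forall>e. \<psi> e \<noteq> 0 \<longrightarrow> p \<le> e \<and> e \<le> s"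
        using a ks by auto
      show "q = r \<and> Poly_Mapping.lookup (Abs_poly_mapping \<psi>) q = 1"
        using AB HS_pairs[OF _ b(1-4) a(5-9) b(5)] LS_pairs[OF _ b(1-4) a(5-9) b(5)] lk by auto
    qed
  qed
qed

lemma GoodI_HS: "\<psi> e0 = 1 \<Longrightarrow> x \<noteq> y \<Longrightarrow> \<psi> x \<noteq> 0 \<Longrightarrow> \<psi> y \<noteq> 0 \<Longrightarrow> HS \<psi> A B \<Longrightarrow> Good \<psi>"
  unfolding Good_def by blast

lemma GoodI_LS: "\<psi> e0 = 1 \<Longrightarrow> x \<noteq> y \<Longrightarrow> \<psi> x \<noteq> 0 \<Longrightarrow> \<psi> y \<noteq> 0 \<Longrightarrow> LS \<psi> A B \<Longrightarrow> Good \<psi>"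
  unfolding Good_def by blast

lemma Good_two: "Good (\<lambda>e. if e = t then 2 else 0)"
  unfolding Good_def by blast

context
  fixes c :: "int \<Rightarrow> nat" and m M :: int
  assumes fin: "finite {e. c e \<noteq> 0}" and mM: "m < M" and cm: "c m \<noteq> 0" and cM: "c M \<noteq> 0"
    and bnd: "\<And>e. c e \<noteq> 0 \<Longrightarrow> m \<le> e \<and> e \<le> M"
    and sum4: "4 \<le> sum c {e. c e \<noteq> 0}"
begin

lemma sub: "{e. c e \<noteq> 0} \<subseteq> T \<Longrightarrow> finite T \<Longrightarrow> sum c {e. c e \<noteq> 0} \<le> sum c T"
  by (rule sum_mono2) auto

lemma two_only:
  assumes "c m + c M \<le> 3" shows "\<exists>y. y \<noteq> m \<and> y \<noteq> M \<and> c y \<noteq> 0"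
proof (rule ccontr)
  assume "\<not> ?thesis"
  then have "{e. c e \<noteq> 0} \<subseteq> {m, M}" by auto
  then have "sum c {e. c e \<noteq> 0} \<le> sum c {m, M}" by (rule sub) simp
  also have "\<dots> = c m + c M" using mM by simp
  finally show False using sum4 assms by linarith
qed

lemma pos: "c e \<noteq> 0 \<Longrightarrow> e = m \<or> e = M \<or> (m < e \<and> 2 * e \<le> m + M) \<or> (m + M < 2 * e \<and> e < M)"
  using bnd[of e] by linarith

lemma caseI:
  assumes z: "2 * z = m + M" "2 \<le> c z"
  shows "\<exists>\<phi>. (\<forall>e. \<phi> e \<le> c e) \<and> Good \<phi> \<and> Good (\<lambda>e. c e - \<phi> e)"
proof -
  define \<phi> where "\<phi> e = (if e = m then 1 else if 2 * e = m + M then c e - 1 else if m + M < 2 * e \<and> e < M then c e else 0)" for e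
  show ?thesis
  proof (intro exI conjI allI)
    show "\<phi> e \<le> c e" for e using cm by (auto simp: \<phi>_def)
    show "Good \<phi>"
    proof (rule GoodI_HS[of _ m m z m M])
      show "\<phi> m = 1" "m \<noteq> z" "\<phi> m \<noteq> 0" "\<phi> z \<noteq> 0" using z mM by (auto simp: \<phi>_def)
      show "HS \<phi> m M" unfolding HS_def using mM bnd by (auto simp: \<phi>_def split: if_splits)
    qed
    show "Good (\<lambda>e. c e - \<phi> e)"
    proof (rule GoodI_LS[of _ z z M m M])
      show "c z - \<phi> z = 1" "z \<noteq> M" "c z - \<phi> z \<noteq> 0" "c M - \<phi> M \<noteq> 0" using z mM cM by (auto simp: \<phi>_def)
      show "LS (\<lambda>e. c e - \<phi> e) m M" unfolding LS_def
      proof (intro conjI allI impI)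
        show "c M - \<phi> M \<noteq> 0" "m < M" using mM cM by (auto simp: \<phi>_def)
        fix e assume ne: "c e - \<phi> e \<noteq> 0" "e \<noteq> M"
        then have ce: "c e \<noteq> 0" by auto
        have b: "m \<le> e" "e \<le> M" using bnd[OF ce] by auto
        have nU: "\<not> m + M < 2 * e"
        proof
          assume "m + M < 2 * e"
          then have "\<phi> e = c e" using ne(2) b mM by (auto simp: \<phi>_def)
          then show False using ne by simp
        qed
        show "m \<le> e" "2 * e \<le> m + M" using b nU by auto
        assume "2 * e = m + M"
        moreover then have "e \<noteq> m" using mM by auto
        ultimately have "\<phi> e = c e - 1" by (simp add: \<phi>_def)
        then show "c e - \<phi> e = 1 \<or> c m - \<phi> m = 0" using ce by simp
      qed
    qed
  qed
qed

lemma caseII: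
  assumes Z1: "\<And>e. 2 * e = m + M \<Longrightarrow> c e \<le> 1"
    and hU: "2 \<le> c M \<or> (\<exists>u. c u \<noteq> 0 \<and> m + M < 2 * u \<and> u < M)"
    and hL: "2 \<le> c m \<or> (\<exists>l. c l \<noteq> 0 \<and> m < l \<and> 2 * l \<le> m + M)"
  shows "\<exists>\<phi>. (\<forall>e. \<phi> e \<le> c e) \<and> Good \<phi> \<and> Good (\<lambda>e. c e - \<phi> e)"
proof -
  define \<phi> where "\<phi> e = (if e = m then 1 else if e = M then c M - 1 else if m + M < 2 * e then c e else 0)" for e
  obtain y where y: "y \<noteq> m" "\<phi> y \<noteq> 0"
  proof (cases "2 \<le> c M")
    case True then show ?thesis using that[of M] mM by (auto simp: \<phi>_def)
  next
    case False then obtain u where "c u \<noteq> 0" "m + M < 2 * u" "u < M" using hU by auto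
    then show ?thesis using that[of u] mM by (auto simp: \<phi>_def)
  qed
  obtain y' where y': "y' \<noteq> M" "c y' - \<phi> y' \<noteq> 0"
  proof (cases "2 \<le> c m")
    case True then show ?thesis using that[of m] mM by (auto simp: \<phi>_def)
  next
    case False then obtain l where "c l \<noteq> 0" "m < l" "2 * l \<le> m + M" using hL by auto
    then show ?thesis using that[of l] mM by (auto simp: \<phi>_def)
  qed
  show ?thesis
  proof (intro exI conjI allI)
    show "\<phi> e \<le> c e" for e using cm by (auto simp: \<phi>_def)
    show "Good \<phi>"
    proof (rule GoodI_HS[of _ m m y m M])
      show "\<phi> m = 1" "m \<noteq> y" "\<phi> m \<noteq> 0" "\<phi> y \<noteq> 0" using y mM by (auto simp: \<phi>_def)
      show "HS \<phi> m M" unfolding HS_def using mM bnd by (auto simp: \<phi>_def split: if_splits)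
    qed
    show "Good (\<lambda>e. c e - \<phi> e)"
    proof (rule GoodI_LS[of _ M M y' m M])
      show "c M - \<phi> M = 1" "M \<noteq> y'" "c M - \<phi> M \<noteq> 0" "c y' - \<phi> y' \<noteq> 0" using y' mM cM by (auto simp: \<phi>_def)
      show "LS (\<lambda>e. c e - \<phi> e) m M" unfolding LS_def
      proof (intro conjI allI impI)
        show "c M - \<phi> M \<noteq> 0" "m < M" using mM cM by (auto simp: \<phi>_def)
        fix e assume ne: "c e - \<phi> e \<noteq> 0" "e \<noteq> M"
        then have ce: "c e \<noteq> 0" by auto
        have b: "m \<le> e" "e \<le> M" using bnd[OF ce] by auto
        have nU: "\<not> m + M < 2 * e"
        proof
          assume "m + M < 2 * e"
          then have "\<phi> e = c e" using ne(2) b mM by (auto simp: \<phi>_def)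
          then show False using ne by simp
        qed
        show "m \<le> e" "2 * e \<le> m + M" using b nU by auto
        assume e2: "2 * e = m + M"
        then have "e \<noteq> m" using mM by auto
        then have "\<phi> e = 0" using e2 ne(2) by (simp add: \<phi>_def)
        moreover have "c e \<le> 1" using Z1[OF e2] .
        ultimately show "c e - \<phi> e = 1 \<or> c m - \<phi> m = 0" using ce by simp
      qed
    qed
  qed
qed

lemma caseC:
  assumes Z1: "\<And>e. 2 * e = m + M \<Longrightarrow> c e \<le> 1"
    and cM1: "c M = 1" and nU: "\<not> (\<exists>u. c u \<noteq> 0 \<and> m + M < 2 * u \<and> u < M)"
    and cm2: "2 \<le> c m"
  shows "\<exists>\<phi>. (\<forall>e. \<phi> e \<le> c e) \<and> Good \<phi> \<and> Good (\<lambda>e. c e - \<phi> e)"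
proof -
  define \<phi> where "\<phi> e = (if e = m then c m - 2 else c e)" for e
  have psi: "(\<lambda>e. c e - \<phi> e) = (\<lambda>e. if e = m then 2 else 0)"
    using cm2 by (auto simp: \<phi>_def fun_eq_iff)
  obtain y where y: "y \<noteq> M" "\<phi> y \<noteq> 0"
  proof (cases "3 \<le> c m")
    case True then show ?thesis using that[of m] mM by (auto simp: \<phi>_def)
  next
    case False
    then have "c m + c M \<le> 3" using cM1 by simp
    then obtain y where "y \<noteq> m" "y \<noteq> M" "c y \<noteq> 0" using two_only by blast
    then show ?thesis using that[of y] by (auto simp: \<phi>_def)
  qed
  show ?thesis
  proof (intro exI conjI allI)
    show "\<phi> e \<le> c e" for e by (auto simp: \<phi>_def)
    show "Good (\<lambda>e. c e - \<phi> e)" unfolding psi by (rule Good_two)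
    show "Good \<phi>"
    proof (rule GoodI_LS[of _ M M y m M])
      show "\<phi> M = 1" "M \<noteq> y" "\<phi> M \<noteq> 0" "\<phi> y \<noteq> 0" using y mM cM1 by (auto simp: \<phi>_def)
      show "LS \<phi> m M" unfolding LS_def
      proof (intro conjI allI impI)
        show "\<phi> M \<noteq> 0" "m < M" using mM cM1 by (auto simp: \<phi>_def)
        fix e assume ne: "\<phi> e \<noteq> 0" "e \<noteq> M"
        have le: "m \<le> e \<and> 2 * e \<le> m + M"
        proof (cases "e = m")
          case False
          then have ce: "c e \<noteq> 0" using ne by (auto simp: \<phi>_def)
          have "\<not> (m + M < 2 * e \<and> e < M)" using nU ce by blast
          then show ?thesis using pos[OF ce] ne(2) False by auto
        qed (use mM in auto)
        then show "m \<le> e" "2 * e \<le> m + M" by auto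
        assume e2: "2 * e = m + M"
        then have "e \<noteq> m" using mM by auto
        then have "\<phi> e = c e" by (simp add: \<phi>_def)
        moreover have "c e \<le> 1" using Z1[OF e2] .
        ultimately show "\<phi> e = 1 \<or> \<phi> m = 0" using ne by simp
      qed
    qed
  qed
qed

lemma caseD:
  assumes cm1: "c m = 1" and nL: "\<not> (\<exists>l. c l \<noteq> 0 \<and> m < l \<and> 2 * l \<le> m + M)"
    and cM2: "2 \<le> c M"
  shows "\<exists>\<phi>. (\<forall>e. \<phi> e \<le> c e) \<and> Good \<phi> \<and> Good (\<lambda>e. c e - \<phi> e)"
proof -
  define \<phi> where "\<phi> e = (if e = M then c M - 2 else c e)" for e
  have psi: "(\<lambda>e. c e - \<phi> e) = (\<lambda>e. if e = M then 2 else 0)"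
    using cM2 by (auto simp: \<phi>_def fun_eq_iff)
  obtain y where y: "y \<noteq> m" "\<phi> y \<noteq> 0"
  proof (cases "3 \<le> c M")
    case True then show ?thesis using that[of M] mM by (auto simp: \<phi>_def)
  next
    case False
    then have "c m + c M \<le> 3" using cm1 by simp
    then obtain y where "y \<noteq> m" "y \<noteq> M" "c y \<noteq> 0" using two_only by blast
    then show ?thesis using that[of y] by (auto simp: \<phi>_def)
  qed
  show ?thesis
  proof (intro exI conjI allI)
    show "\<phi> e \<le> c e" for e by (auto simp: \<phi>_def)
    show "Good (\<lambda>e. c e - \<phi> e)" unfolding psi by (rule Good_two)
    show "Good \<phi>"
    proof (rule GoodI_HS[of _ m m y m M])
      show "\<phi> m = 1" "m \<noteq> y" "\<phi> m \<noteq> 0" "\<phi> y \<noteq> 0" using y mM cm1 by (auto simp: \<phi>_def)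
      show "HS \<phi> m M" unfolding HS_def
      proof (intro conjI allI impI)
        show "\<phi> m \<noteq> 0" "m < M" using mM cm1 by (auto simp: \<phi>_def)
        fix e assume ne: "\<phi> e \<noteq> 0" "e \<noteq> m"
        have le: "e \<le> M \<and> m + M < 2 * e"
        proof (cases "e = M")
          case False
          then have ce: "c e \<noteq> 0" using ne by (auto simp: \<phi>_def)
          have "\<not> (m < e \<and> 2 * e \<le> m + M)" using nL ce by blast
          then show ?thesis using pos[OF ce] ne(2) False by auto
        qed (use mM in auto)
        then show "e \<le> M" "m + M \<le> 2 * e" by auto
        assume e2: "2 * e = m + M"
        then show "\<phi> e = 1 \<or> \<phi> M = 0" using le by simp
      qed
    qed
  qed
qed

lemma caseE:
  assumes cm1: "c m = 1" and cM1: "c M = 1"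
    and side: "\<not> (\<exists>u. c u \<noteq> 0 \<and> m + M < 2 * u \<and> u < M) \<or> \<not> (\<exists>l. c l \<noteq> 0 \<and> m < l \<and> 2 * l \<le> m + M)"
  shows "\<exists>\<phi>. (\<forall>e. \<phi> e \<le> c e) \<and> Good \<phi> \<and> Good (\<lambda>e. c e - \<phi> e)"
proof -
  obtain k where k: "k \<noteq> m" "k \<noteq> M" "c k \<noteq> 0" using two_only cm1 cM1 by auto
  have kmM: "m < k" "k < M" using bnd[OF k(3)] k by auto
  show ?thesis
  proof (cases "\<forall>e. c e \<noteq> 0 \<longrightarrow> e = m \<or> e = k \<or> e = M")
    case True
    then have "{e. c e \<noteq> 0} \<subseteq> {m, k, M}" by auto
    then have "sum c {e. c e \<noteq> 0} \<le> sum c {m, k, M}" by (rule sub) simp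
    also have "\<dots> = c m + c k + c M" using kmM by simp
    finally have ck: "2 \<le> c k" using sum4 cm1 cM1 by linarith
    define \<phi> where "\<phi> e = (if e = m then 1 else if e = k then c k - 1 else 0)" for e
    show ?thesis
    proof (intro exI conjI allI)
      show "\<phi> e \<le> c e" for e using cm1 by (auto simp: \<phi>_def)
      show "Good \<phi>"
      proof (rule GoodI_HS[of _ m m k m k])
        show "\<phi> m = 1" "m \<noteq> k" "\<phi> m \<noteq> 0" "\<phi> k \<noteq> 0" using kmM ck by (auto simp: \<phi>_def)
        show "HS \<phi> m k" unfolding HS_def using kmM ck by (auto simp: \<phi>_def split: if_splits)
      qed
      show "Good (\<lambda>e. c e - \<phi> e)"
      proof (rule GoodI_HS[of _ k k M k M])
        show "c k - \<phi> k = 1" "k \<noteq> M" "c k - \<phi> k \<noteq> 0" "c M - \<phi> M \<noteq> 0" using kmM ck cM1 by (auto simp: \<phi>_def)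
        show "HS (\<lambda>e. c e - \<phi> e) k M" unfolding HS_def
        proof (intro conjI allI impI)
          show "c k - \<phi> k \<noteq> 0" "k < M" using kmM ck by (auto simp: \<phi>_def)
          fix e assume ne: "c e - \<phi> e \<noteq> 0" "e \<noteq> k"
          then have "c e \<noteq> 0" by auto
          then have "e = m \<or> e = M" using True ne(2) by blast
          moreover have "e \<noteq> m" using ne cm1 by (auto simp: \<phi>_def)
          ultimately have eM: "e = M" by blast
          then show "e \<le> M" "k + M \<le> 2 * e" using kmM by auto
          show "2 * e = k + M \<Longrightarrow> c e - \<phi> e = 1 \<or> c M - \<phi> M = 0" using eM kmM by auto
        qed
      qed
    qed
  next
    case False
    then obtain k' where k': "c k' \<noteq> 0" "k' \<noteq> m" "k' \<noteq> k" "k' \<noteq> M" by blast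
    have k'mM: "m < k'" "k' < M" using bnd[OF k'(1)] k' by auto
    show ?thesis
    proof (cases "\<exists>u. c u \<noteq> 0 \<and> m + M < 2 * u \<and> u < M")
      case hasU: False
      define \<phi> where "\<phi> e = (if e = m then 1 else if e = k then c k else 0)" for e
      show ?thesis
      proof (intro exI conjI allI)
        show "\<phi> e \<le> c e" for e using cm1 by (auto simp: \<phi>_def)
        show "Good \<phi>"
        proof (rule GoodI_HS[of _ m m k m k])
          show "\<phi> m = 1" "m \<noteq> k" "\<phi> m \<noteq> 0" "\<phi> k \<noteq> 0" using kmM k by (auto simp: \<phi>_def)
          show "HS \<phi> m k" unfolding HS_def using kmM k by (auto simp: \<phi>_def split: if_splits)
        qed
        show "Good (\<lambda>e. c e - \<phi> e)"
        proof (rule GoodI_LS[of _ M M k' m M])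
          show "c M - \<phi> M = 1" "M \<noteq> k'" "c M - \<phi> M \<noteq> 0" "c k' - \<phi> k' \<noteq> 0" using kmM k' cM1 by (auto simp: \<phi>_def)
          show "LS (\<lambda>e. c e - \<phi> e) m M" unfolding LS_def
          proof (intro conjI allI impI)
            show "c M - \<phi> M \<noteq> 0" "m < M" using kmM mM cM1 by (auto simp: \<phi>_def)
            fix e assume ne: "c e - \<phi> e \<noteq> 0" "e \<noteq> M"
            then have ce: "c e \<noteq> 0" by auto
            have em: "e \<noteq> m" using ne cm1 by (auto simp: \<phi>_def)
            have "\<not> (m + M < 2 * e \<and> e < M)" using hasU ce by blast
            then have le: "m \<le> e \<and> 2 * e \<le> m + M" using pos[OF ce] ne(2) em by auto
            then show "m \<le> e" "2 * e \<le> m + M" by auto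
            show "2 * e = m + M \<Longrightarrow> c e - \<phi> e = 1 \<or> c m - \<phi> m = 0" using cm1 by (simp add: \<phi>_def)
          qed
        qed
      qed
    next
      case hasU: True
      then have hasL: "\<not> (\<exists>l. c l \<noteq> 0 \<and> m < l \<and> 2 * l \<le> m + M)" using side by blast
      define \<phi> where "\<phi> e = (if e = M then 1 else if e = k then c k else 0)" for e
      show ?thesis
      proof (intro exI conjI allI)
        show "\<phi> e \<le> c e" for e using cM1 by (auto simp: \<phi>_def)
        show "Good \<phi>"
        proof (rule GoodI_HS[of _ M M k k M])
          show "\<phi> M = 1" "M \<noteq> k" "\<phi> M \<noteq> 0" "\<phi> k \<noteq> 0" using kmM k by (auto simp: \<phi>_def)
          show "HS \<phi> k M" unfolding HS_def using kmM k by (auto simp: \<phi>_def split: if_splits)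
        qed
        show "Good (\<lambda>e. c e - \<phi> e)"
        proof (rule GoodI_HS[of _ m m k' m M])
          show "c m - \<phi> m = 1" "m \<noteq> k'" "c m - \<phi> m \<noteq> 0" "c k' - \<phi> k' \<noteq> 0" using kmM k' cm1 by (auto simp: \<phi>_def)
          show "HS (\<lambda>e. c e - \<phi> e) m M" unfolding HS_def
          proof (intro conjI allI impI)
            show "c m - \<phi> m \<noteq> 0" "m < M" using kmM mM cm1 by (auto simp: \<phi>_def)
            fix e assume ne: "c e - \<phi> e \<noteq> 0" "e \<noteq> m"
            then have ce: "c e \<noteq> 0" by auto
            have eM: "e \<noteq> M" using ne cM1 by (auto simp: \<phi>_def)
            have "\<not> (m < e \<and> 2 * e \<le> m + M)" using hasL ce by blast
            then have le: "e \<le> M \<and> m + M < 2 * e" using pos[OF ce] ne(2) eM by auto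
            then show "e \<le> M" "m + M \<le> 2 * e" by auto
            show "2 * e = m + M \<Longrightarrow> c e - \<phi> e = 1 \<or> c M - \<phi> M = 0" using le by simp
          qed
        qed
      qed
    qed
  qed
qed

lemma split_exists: "\<exists>\<phi>. (\<forall>e. \<phi> e \<le> c e) \<and> Good \<phi> \<and> Good (\<lambda>e. c e - \<phi> e)"
proof (cases "\<exists>z. 2 * z = m + M \<and> 2 \<le> c z")
  case True then show ?thesis using caseI by blast
next
  case False
  then have Z1: "\<And>e. 2 * e = m + M \<Longrightarrow> c e \<le> 1" by force
  show ?thesis
  proof (cases "(2 \<le> c M \<or> (\<exists>u. c u \<noteq> 0 \<and> m + M < 2 * u \<and> u < M)) \<and> (2 \<le> c m \<or> (\<exists>l. c l \<noteq> 0 \<and> m < l \<and> 2 * l \<le> m + M))")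
    case True then show ?thesis using caseII[OF Z1] by blast
  next
    case notII: False
    show ?thesis
    proof (cases "2 \<le> c m")
      case cm2: True
      then have "c M = 1 \<and> \<not> (\<exists>u. c u \<noteq> 0 \<and> m + M < 2 * u \<and> u < M)" using notII cM by auto
      then show ?thesis using caseC[OF Z1 _ _ cm2] by blast
    next
      case False
      then have cm1: "c m = 1" using cm by simp
      show ?thesis
      proof (cases "2 \<le> c M")
        case cM2: True
        then have "\<not> (\<exists>l. c l \<noteq> 0 \<and> m < l \<and> 2 * l \<le> m + M)" using notII cm1 by auto
        then show ?thesis using caseD[OF cm1 _ cM2] by blast
      next
        case False
        then have cM1: "c M = 1" using cM by simp
        show ?thesis using caseE[OF cm1 cM1] notII cm1 cM1 by auto
      qed
    qed
  qed
qed

end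

theorem theorem1p1:
  fixes f :: laurent_nat
  assumes "eval_one f > 3" and "card (Poly_Mapping.keys f) > 1"
  shows "\<exists>g h :: laurent_nat. f = g + h \<and> irreducible g \<and> irreducible h"
proof -
  define c where "c = Poly_Mapping.lookup f"
  have ks: "Poly_Mapping.keys f = {e. c e \<noteq> 0}" by (auto simp: c_def in_keys_iff)
  have fin: "finite {e. c e \<noteq> 0}" using ks[symmetric] by simp
  obtain x y where xy: "x \<in> Poly_Mapping.keys f" "y \<in> Poly_Mapping.keys f" "x \<noteq> y"
  proof -
    have "\<not> card (Poly_Mapping.keys f) \<le> Suc 0" using assms(2) by simp
    then have "\<not> (\<forall>a\<in>Poly_Mapping.keys f. \<forall>b\<in>Poly_Mapping.keys f. a = b)"
      using card_le_Suc0_iff_eq[OF finite_keys] by blast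
    then show ?thesis using that by blast
  qed
  define m where "m = Min (Poly_Mapping.keys f)"
  define M where "M = Max (Poly_Mapping.keys f)"
  have mk: "m \<in> Poly_Mapping.keys f" "M \<in> Poly_Mapping.keys f" unfolding m_def M_def using xy
    by (auto intro: Min_in Max_in)
  have bnd: "m \<le> e \<and> e \<le> M" if "c e \<noteq> 0" for e
  proof -
    have "e \<in> Poly_Mapping.keys f" using ks that by simp
    then show ?thesis unfolding m_def M_def by (simp add: Min_le Max_ge)
  qed
  have mM: "m < M"
  proof -
    have "m \<le> x" "m \<le> y" "x \<le> M" "y \<le> M" using bnd xy ks by auto
    then show ?thesis using xy(3) by linarith
  qed
  have sum4: "4 \<le> sum c {e. c e \<noteq> 0}" using assms(1) ks by (simp add: eval_one_def c_def)
  have cm: "c m \<noteq> 0" "c M \<noteq> 0" using mk ks by auto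
  obtain \<phi> where \<phi>: "\<forall>e. \<phi> e \<le> c e" "Good \<phi>" "Good (\<lambda>e. c e - \<phi> e)"
    using split_exists[OF fin mM cm bnd sum4] by blast
  have fin1: "finite {e. \<phi> e \<noteq> 0}" by (rule finite_subset[OF _ fin]) (use \<phi>(1) in \<open>auto intro: less_le_trans\<close>)
  have fin2: "finite {e. c e - \<phi> e \<noteq> 0}" by (rule finite_subset[OF _ fin]) auto
  define g where "g = (Abs_poly_mapping \<phi> :: laurent_nat)"
  define h where "h = (Abs_poly_mapping (\<lambda>e. c e - \<phi> e) :: laurent_nat)"
  have "f = g + h"
  proof (rule poly_mapping_eqI)
    fix e
    show "Poly_Mapping.lookup f e = Poly_Mapping.lookup (g + h) e"
      using \<phi>(1) fin1 fin2 by (simp add: g_def h_def lookup_add Abs_poly_mapping_inverse c_def[symmetric])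
  qed
  moreover have "irreducible g" unfolding g_def by (rule Good_irr[OF fin1 \<phi>(2)])
  moreover have "irreducible h" unfolding h_def by (rule Good_irr[OF fin2 \<phi>(3)])
  ultimately show ?thesis by blast
qed

end
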